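(* Let $n$ be divisible by $4$, $m=n/4$, and let $R=S\times T$ with $S\subseteq\mathcal{P}(X)$, $T\subseteq\mathcal{P}(Y)$ be a $[1,n]$-rectangle. Then \[ \big||R\cap A|-|R\cap B|\big|\le 2^{3m}. \]
   Context: $X=\{x_1,\dots,x_n\}$, $Y=\{y_1,\dots,y_n\}$, $Z=X\cup Y$, $z_i=x_i$ ($i\in[n]$), $z_i=y_{i-n}$ ($i\in[n+1,2n]$), $Z[i,j]=\{z_\ell:i\le\ell\le j\}$. $S\times T=\{U\cup V:U\in S,V\in T\}$. With $m=n/4$, intervals $I_k=Z[4(k-1)+1,4k]$, $k\in[2m]$. $\mathcal{L}=\{U\subseteq Z: |U\cap I_k|=1\ \forall k\in[2m]\}$. $A=\{U\in\mathcal{L}: |\{i\in[n]: x_i,y_i\in U\}| \text{ odd}\}$, $B=\mathcal{L}\setminus A$. *)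

theory Defs
  imports Main
begin

(* Encoding: z_i is the natural number i (1 <= i <= 2n); so x_i = i, y_i = n + i,
   X = {1..n}, Y = {n+1..2n}, Z = {1..2n}. *)

definition Zint :: "nat \<Rightarrow> nat \<Rightarrow> nat set" where
  "Zint i j = {l. i \<le> l \<and> l \<le> j}"

definition Iblk :: "nat \<Rightarrow> nat set" where
  "Iblk k = Zint (4 * (k - 1) + 1) (4 * k)"

definition rect_times :: "'a set set \<Rightarrow> 'a set set \<Rightarrow> 'a set set" where
  "rect_times S T = {U \<union> V | U V. U \<in> S \<and> V \<in> T}"

definition Lset :: "nat \<Rightarrow> nat set set" where
  "Lset n = {U. U \<subseteq> Zint 1 (2 * n) \<and>
               (\<forall>k \<in> {1..2 * (n div 4)}. card (U \<inter> Iblk k) = 1)}"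

definition Aset :: "nat \<Rightarrow> nat set set" where
  "Aset n = {U \<in> Lset n. odd (card {i \<in> {1..n}. i \<in> U \<and> n + i \<in> U})}"

definition Bset :: "nat \<Rightarrow> nat set set" where
  "Bset n = Lset n - Aset n"

end

theory Submission
  imports Defs "HOL-Library.FuncSet"
begin



abbreviation DD :: "nat \<Rightarrow> (nat \<Rightarrow> nat) set" where "DD m \<equiv> PiE {..<m} (\<lambda>_. {..<4::nat})"

definition enc :: "nat \<Rightarrow> nat \<Rightarrow> (nat \<Rightarrow> nat) \<Rightarrow> nat set" where
  "enc m off a = (\<lambda>k. off + 4*k + 1 + a k) ` {..<m}"

lemma arith4: "(x::nat) < 4 \<Longrightarrow> y < 4 \<Longrightarrow> 4*k + x = 4*k' + y \<Longrightarrow> k = k' \<and> x = y"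
  by arith

lemma enc_blk:
  assumes "a \<in> DD m" "j < m"
  shows "enc m off a \<inter> Zint (off + 4*j + 1) (off + 4*j + 4) = {off + 4*j + 1 + a j}"
proof -
  have aj: "a j < 4" using assms by auto
  have k: "k = j" if "k < m" "off + 4*j + 1 \<le> off + 4*k + 1 + a k" "off + 4*k + 1 + a k \<le> off + 4*j + 4" for k
  proof -
    have "a k < 4" using assms \<open>k<m\<close> by auto
    then show ?thesis using that by arith
  qed
  show ?thesis
  proof
    show "enc m off a \<inter> Zint (off + 4*j + 1) (off + 4*j + 4) \<subseteq> {off + 4*j + 1 + a j}"
    proof
      fix x assume x: "x \<in> enc m off a \<inter> Zint (off + 4*j + 1) (off + 4*j + 4)"
      then obtain k where "k < m" "x = off + 4*k+1+a k" by (auto simp: enc_def)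
      with x k[of k] show "x \<in> {off + 4*j + 1 + a j}" by (auto simp: Zint_def)
    qed
    show "{off + 4*j + 1 + a j} \<subseteq> enc m off a \<inter> Zint (off + 4*j + 1) (off + 4*j + 4)"
      using assms aj by (auto simp: enc_def Zint_def)
  qed
qed

lemma enc_out:
  assumes "a \<in> DD m" "x \<in> enc m off a" shows "off + 1 \<le> x \<and> x \<le> off + 4*m"
proof -
  from assms obtain k where "k < m" "x = off + 4*k+1+a k" by (auto simp: enc_def)
  moreover have "a k < 4" using assms \<open>k<m\<close> by auto
  ultimately show ?thesis by arith
qed

lemma enc_inj:
  assumes "a \<in> DD m" "a' \<in> DD m" "enc m off a = enc m off a'" shows "a = a'"
proof (rule PiE_ext[OF assms(1,2)])
  fix j assume "j \<in> {..<m}"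
  then show "a j = a' j" using enc_blk[OF assms(1), of j off] enc_blk[OF assms(2), of j off] assms(3) by auto
qed

lemma enc_surj:
  assumes sub: "V \<subseteq> Zint (off+1) (off + 4*m)"
    and one: "\<forall>j<m. card (V \<inter> Zint (off + 4*j + 1) (off + 4*j + 4)) = 1"
  shows "\<exists>a\<in>DD m. V = enc m off a"
proof -
  have "\<forall>j<m. \<exists>x. V \<inter> Zint (off + 4*j + 1) (off + 4*j + 4) = {x}"
    using one by (metis card_1_singletonE)
  then obtain f where f: "\<And>j. j < m \<Longrightarrow> V \<inter> Zint (off + 4*j + 1) (off + 4*j + 4) = {f j}" by metis
  define a where "a = restrict (\<lambda>j. f j - (off + 4*j + 1)) {..<m}"
  have fin: "f j \<in> V \<and> off + 4*j + 1 \<le> f j \<and> f j \<le> off + 4*j + 4" if "j < m" for j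
    using f[OF that] by (auto simp: Zint_def)
  have lt: "f j - (off + 4*j + 1) < 4" if "j < m" for j using fin[OF that] by arith
  have aD: "a \<in> DD m" using lt by (auto simp: a_def)
  have fa: "off + 4*j + 1 + a j = f j" if "j < m" for j using fin[OF that] that by (auto simp: a_def)
  have "V = enc m off a"
  proof
    show "enc m off a \<subseteq> V" using fa fin by (auto simp: enc_def)
  next
    show "V \<subseteq> enc m off a"
    proof
      fix v assume v: "v \<in> V"
      then have vr: "off + 1 \<le> v" "v \<le> off + 4*m" using sub by (auto simp: Zint_def)
      define j where "j = (v - off - 1) div 4"
      have jm: "j < m" using vr unfolding j_def by arith
      have "v \<in> Zint (off + 4*j + 1) (off + 4*j + 4)" using vr unfolding j_def Zint_def mem_Collect_eq by arith
      then have "v = f j" using f[OF jm] v by auto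
      then have "v = off + 4*j + 1 + a j" using fa[OF jm] by simp
      then show "v \<in> enc m off a" unfolding enc_def using jm by blast
    qed
  qed
  then show ?thesis using aD by blast
qed



definition sg :: "nat \<Rightarrow> nat \<Rightarrow> int" where "sg x y = (if x = y then -1 else 1)"
definition sig :: "nat \<Rightarrow> (nat\<Rightarrow>nat) \<Rightarrow> (nat\<Rightarrow>nat) \<Rightarrow> int" where
  "sig m a b = (\<Prod>k<m. sg (a k) (b k))"

lemma sg_orth: "y < 4 \<Longrightarrow> y' < 4 \<Longrightarrow> (\<Sum>x<4. sg x y * sg x y') = (if y = y' then 4 else 0)"
proof -
  assume "y < 4" "y' < 4"
  moreover have "(\<Sum>x<4. sg x y * sg x y') = sg 0 y * sg 0 y' + sg 1 y * sg 1 y' + sg 2 y * sg 2 y' + sg 3 y * sg 3 y'"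
    by (simp add: numeral_eq_Suc lessThan_Suc)
  ultimately show ?thesis unfolding sg_def by (auto simp: less_Suc_eq numeral_eq_Suc)
qed

lemma orth:
  assumes "b \<in> DD m" "b' \<in> DD m"
  shows "(\<Sum>a\<in>DD m. sig m a b * sig m a b') = (if b = b' then 4^m else 0)"
proof -
  have "(\<Sum>a\<in>DD m. sig m a b * sig m a b') = (\<Sum>a\<in>DD m. \<Prod>k<m. sg (a k) (b k) * sg (a k) (b' k))"
    by (simp add: sig_def prod.distrib)
  also have "\<dots> = (\<Prod>k<m. \<Sum>x<4. sg x (b k) * sg x (b' k))"
    by (rule prod_sum_PiE[symmetric]) auto
  also have "\<dots> = (\<Prod>k<m. (if b k = b' k then 4 else 0))"
    using assms by (intro prod.cong refl sg_orth) (auto simp: PiE_iff)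
  also have "\<dots> = (if b = b' then 4^m else 0)"
  proof (cases "b = b'")
    case True then show ?thesis by simp
  next
    case False
    then obtain k where "b k \<noteq> b' k" by auto
    moreover have "k < m" using assms \<open>b k \<noteq> b' k\<close> by (metis PiE_E lessThan_iff)
    ultimately show ?thesis using False by (auto intro!: prod_zero)
  qed
  finally show ?thesis .
qed

lemma cs:
  fixes f :: "'a \<Rightarrow> int"
  assumes "finite I"
  shows "(\<Sum>i\<in>I. f i)^2 \<le> int (card I) * (\<Sum>i\<in>I. (f i)^2)"
proof -
  have "0 \<le> (\<Sum>i\<in>I. \<Sum>j\<in>I. (f i - f j)^2)" by (intro sum_nonneg) auto
  also have "\<dots> = (\<Sum>i\<in>I. \<Sum>j\<in>I. (f i)^2 + (f j)^2 - 2 * (f i * f j))"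
    by (simp add: power2_eq_square algebra_simps)
  also have "\<dots> = 2 * (int (card I) * (\<Sum>i\<in>I. (f i)^2)) - 2 * (\<Sum>i\<in>I. f i)^2"
  proof -
    have 1: "(\<Sum>i\<in>I. \<Sum>j\<in>I. (f i)^2 + (f j)^2 - 2 * (f i * f j)) =
      (\<Sum>i\<in>I. \<Sum>j\<in>I. (f i)^2) + (\<Sum>i\<in>I. \<Sum>j\<in>I. (f j)^2) - 2 * (\<Sum>i\<in>I. \<Sum>j\<in>I. f i * f j)"
      by (simp only: sum.distrib sum_subtractf sum_distrib_left)
    have 2: "(\<Sum>i\<in>I. \<Sum>j\<in>I. f i * f j) = (\<Sum>i\<in>I. f i)^2"
      by (simp only: sum_product power2_eq_square)
    have 3: "(\<Sum>i\<in>I. \<Sum>j\<in>I. (f i)^2) = int (card I) * (\<Sum>i\<in>I. (f i)^2)"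
      by (simp add: sum_distrib_left mult.commute)
    have 4: "(\<Sum>i\<in>I. \<Sum>j\<in>I. (f j)^2) = int (card I) * (\<Sum>i\<in>I. (f i)^2)"
      by simp
    show ?thesis unfolding 1 2 3 4 by simp
  qed
  finally show ?thesis by simp
qed

lemma disc:
  assumes S: "S' \<subseteq> DD m" and T: "T' \<subseteq> DD m"
  shows "\<bar>\<Sum>a\<in>S'. \<Sum>b\<in>T'. sig m a b\<bar> \<le> 2^(3*m)"
proof -
  have fD: "finite (DD m)" by (simp add: finite_PiE)
  have cD: "card (DD m) = 4^m" by (simp add: card_PiE)
  have fS: "finite S'" "finite T'" using S T fD finite_subset by metis+
  have cS: "card S' \<le> 4^m" "card T' \<le> 4^m" using S T fD cD card_mono by metis+
  define g where "g a = (\<Sum>b\<in>T'. sig m a b)" for a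
  have "(\<Sum>a\<in>S'. g a)^2 \<le> int (card S') * (\<Sum>a\<in>S'. (g a)^2)" by (rule cs) (simp add: fS)
  also have "(\<Sum>a\<in>S'. (g a)^2) \<le> (\<Sum>a\<in>DD m. (g a)^2)"
    by (rule sum_mono2[OF fD S]) auto
  also have "(\<Sum>a\<in>DD m. (g a)^2) = (\<Sum>a\<in>DD m. \<Sum>b\<in>T'. \<Sum>b'\<in>T'. sig m a b * sig m a b')"
    by (simp add: g_def power2_eq_square sum_product)
  also have "\<dots> = (\<Sum>b\<in>T'. \<Sum>b'\<in>T'. \<Sum>a\<in>DD m. sig m a b * sig m a b')"
    by (simp only: sum.swap[of _ "DD m"])
  also have "\<dots> = (\<Sum>b\<in>T'. \<Sum>b'\<in>T'. (if b = b' then 4^m else 0))"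
    using T by (intro sum.cong refl orth) auto
  also have "\<dots> = int (card T') * 4^m" using fS by simp
  finally have "(\<Sum>a\<in>S'. g a)^2 \<le> int (card S') * (int (card T') * 4^m)"
    by (simp add: mult_left_mono)
  also have "\<dots> \<le> 4^m * (4^m * 4^m)"
    using cS by (intro mult_mono) (auto simp del: of_nat_power simp: of_nat_power[symmetric])
  also have "\<dots> = (2^(3*m))^2"
  proof -
    have "((2::int)^(3*m))^2 = (2^2)^(3*m)" by (simp only: power_mult[symmetric] mult.commute)
    also have "\<dots> = 4^(m+m+m)" by simp
    finally show ?thesis by (simp add: power_add)
  qed
  finally have "(\<Sum>a\<in>S'. g a)^2 \<le> (2^(3*m))^2" .
  then have "\<bar>\<Sum>a\<in>S'. g a\<bar> \<le> 2^(3*m)"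
    by (metis abs_le_square_iff abs_of_nonneg zero_le_power zero_le_numeral)
  then show ?thesis by (simp add: g_def)
qed

lemma sig_parity:
  "sig m a b = (if odd (card {k. k < m \<and> a k = b k}) then -1 else 1)"
proof -
  have "sig m a b = (\<Prod>k<m. if a k = b k then -1 else 1)" by (simp add: sig_def sg_def)
  also have "\<dots> = (-1) ^ card ({..<m} \<inter> {k. a k = b k})"
    by (simp add: prod.If_cases)
  also have "{..<m} \<inter> {k. a k = b k} = {k. k < m \<and> a k = b k}" by auto
  finally show ?thesis by (simp add: minus_one_power_iff)
qed

definition FF :: "nat \<Rightarrow> (nat \<Rightarrow> nat) \<Rightarrow> (nat \<Rightarrow> nat) \<Rightarrow> nat set" where
  "FF m a b = enc m 0 a \<union> enc m (4*m) b"

lemma FF_lo: assumes "a \<in> DD m" "b \<in> DD m" shows "FF m a b \<inter> Zint 1 (4*m) = enc m 0 a"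
proof -
  have "x \<notin> Zint 1 (4*m)" if "x \<in> enc m (4*m) b" for x
    using enc_out[OF assms(2) that] by (simp add: Zint_def)
  moreover have "x \<in> Zint 1 (4*m)" if "x \<in> enc m 0 a" for x
    using enc_out[OF assms(1) that] by (simp add: Zint_def)
  ultimately show ?thesis unfolding FF_def by blast
qed

lemma FF_hi: assumes "a \<in> DD m" "b \<in> DD m" shows "FF m a b \<inter> Zint (4*m+1) (2*(4*m)) = enc m (4*m) b"
proof -
  have "x \<in> Zint (4*m+1) (2*(4*m))" if "x \<in> enc m (4*m) b" for x
    using enc_out[OF assms(2) that] by (simp add: Zint_def)
  moreover have "x \<notin> Zint (4*m+1) (2*(4*m))" if "x \<in> enc m 0 a" for x
    using enc_out[OF assms(1) that] by (simp add: Zint_def)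
  ultimately show ?thesis unfolding FF_def by blast
qed

lemma FF_inj: "inj_on (\<lambda>(a,b). FF m a b) (DD m \<times> DD m)"
proof (rule inj_onI, clarsimp)
  fix a b a' b' assume h: "a \<in> DD m" "b \<in> DD m" "a' \<in> DD m" "b' \<in> DD m" "FF m a b = FF m a' b'"
  then have "enc m 0 a = enc m 0 a'" "enc m (4*m) b = enc m (4*m) b'"
    using FF_lo FF_hi by metis+
  then show "a = a' \<and> b = b'" using enc_inj h by metis
qed

lemma FF_L:
  assumes a: "a \<in> DD m" and b: "b \<in> DD m"
  shows "FF m a b \<in> Lset (4*m)"
proof -
  have "x \<in> Zint 1 (2*(4*m))" if "x \<in> enc m (4*m) b" for x
    using enc_out[OF b that] by (simp add: Zint_def)
  moreover have "x \<in> Zint 1 (2*(4*m))" if "x \<in> enc m 0 a" for x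
    using enc_out[OF a that] by (simp add: Zint_def)
  ultimately have sub: "FF m a b \<subseteq> Zint 1 (2*(4*m))" unfolding FF_def by blast
  have "card (FF m a b \<inter> Iblk k) = 1" if k: "k \<in> {1..2*m}" for k
  proof (cases "k \<le> m")
    case True
    have "4*k = 4*(k-1)+4" using k by auto
    then have I: "Iblk k = Zint (0 + 4*(k-1) + 1) (0 + 4*(k-1) + 4)"
      by (simp add: Iblk_def)
    have "x \<notin> Iblk k" if "x \<in> enc m (4*m) b" for x
      using enc_out[OF b that] True k unfolding I Zint_def mem_Collect_eq by arith
    then have "enc m (4*m) b \<inter> Iblk k = {}" by blast
    then have "FF m a b \<inter> Iblk k = enc m 0 a \<inter> Iblk k" unfolding FF_def by blast
    also have "\<dots> = {0 + 4*(k-1) + 1 + a (k-1)}" unfolding I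
      by (rule enc_blk[OF a]) (use True k in auto)
    finally show ?thesis by simp
  next
    case False
    have e1: "4*(k-1)+1 = 4*m + 4*(k-m-1) + 1" "4*k = 4*m + 4*(k-m-1) + 4" using k False by auto
    have I: "Iblk k = Zint (4*m + 4*(k-m-1) + 1) (4*m + 4*(k-m-1) + 4)"
      unfolding Iblk_def e1 ..
    have "x \<notin> Iblk k" if "x \<in> enc m 0 a" for x
      using enc_out[OF a that] False k unfolding I Zint_def mem_Collect_eq by arith
    then have "enc m 0 a \<inter> Iblk k = {}" by blast
    then have "FF m a b \<inter> Iblk k = enc m (4*m) b \<inter> Iblk k" unfolding FF_def by blast
    also have "\<dots> = {4*m + 4*(k-m-1) + 1 + b (k-m-1)}" unfolding I
      by (rule enc_blk[OF b]) (use False k in auto)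
    finally show ?thesis by simp
  qed
  then show ?thesis using sub unfolding Lset_def by simp
qed


lemma DDlt: "a \<in> DD m \<Longrightarrow> k < m \<Longrightarrow> a k < 4" by auto

lemma FF_pairs:
  assumes a: "a \<in> DD m" and b: "b \<in> DD m"
  shows "card {i \<in> {1..4*m}. i \<in> FF m a b \<and> 4*m + i \<in> FF m a b} = card {k. k < m \<and> a k = b k}"
proof -
  have eq: "{i \<in> {1..4*m}. i \<in> FF m a b \<and> 4*m + i \<in> FF m a b} = (\<lambda>k. 4*k+1+a k) ` {k. k < m \<and> a k = b k}"
  proof
    show "{i \<in> {1..4*m}. i \<in> FF m a b \<and> 4*m + i \<in> FF m a b} \<subseteq> (\<lambda>k. 4*k+1+a k) ` {k. k < m \<and> a k = b k}"
    proof
      fix i assume i: "i \<in> {i \<in> {1..4*m}. i \<in> FF m a b \<and> 4*m + i \<in> FF m a b}"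
      moreover have "i \<notin> enc m (4*m) b" using enc_out[OF b, of i "4*m"] i by auto
      ultimately have "i \<in> enc m 0 a" unfolding FF_def by auto
      then obtain k where k: "k < m" "i = 4*k+1+a k" by (auto simp: enc_def)
      have "4*m + i \<notin> enc m 0 a" using enc_out[OF a, of "4*m+i" 0] i by auto
      then have "4*m + i \<in> enc m (4*m) b" using i unfolding FF_def by auto
      then obtain k' where k': "k' < m" "4*m+i = 4*m + 4*k'+1+b k'" by (auto simp: enc_def)
      have "a k < 4" using DDlt[OF a k(1)] .
      moreover have "b k' < 4" using DDlt[OF b k'(1)] .
      moreover have "4*k + a k = 4*k' + b k'" using k(2) k'(2) by simp
      ultimately have kk: "k = k' \<and> a k = b k'" using arith4[of "a k" "b k'" k k'] by blast
      then have "a k = b k" by metis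
      then have "k \<in> {k. k < m \<and> a k = b k}" using k(1) by simp
      then show "i \<in> (\<lambda>k. 4*k+1+a k) ` {k. k < m \<and> a k = b k}" using k(2) by blast
    qed
    show "(\<lambda>k. 4*k+1+a k) ` {k. k < m \<and> a k = b k} \<subseteq> {i \<in> {1..4*m}. i \<in> FF m a b \<and> 4*m + i \<in> FF m a b}"
    proof
      fix i assume "i \<in> (\<lambda>k. 4*k+1+a k) ` {k. k < m \<and> a k = b k}"
      then obtain k where k: "k < m" "a k = b k" "i = 4*k+1+a k" by auto
      have "a k < 4" using DDlt[OF a k(1)] .
      then have i1: "i \<le> 4*m" "1 \<le> i" using k(1,3) by arith+
      have "i \<in> enc m 0 a" unfolding enc_def using k(1,3) by simp
      moreover have "4*m+i \<in> enc m (4*m) b"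
      proof -
        have "4*m+i = 4*m + 4*k+1+b k" using k(2,3) by simp
        then show ?thesis unfolding enc_def using k(1) by blast
      qed
      ultimately show "i \<in> {i \<in> {1..4*m}. i \<in> FF m a b \<and> 4*m + i \<in> FF m a b}"
        using i1 by (simp add: FF_def)
    qed
  qed
  have inj: "inj_on (\<lambda>k. 4*k+1+a k) {k. k < m \<and> a k = b k}"
  proof (rule inj_onI)
    fix k k' assume h: "k \<in> {k. k < m \<and> a k = b k}" "k' \<in> {k. k < m \<and> a k = b k}" "4*k+1+a k = 4*k'+1+a k'"
    have "k < m" using h(1) by blast
    then have "a k < 4" using DDlt[OF a] by blast
    moreover have "k' < m" using h(2) by blast
    then have "a k' < 4" using DDlt[OF a] by blast
    moreover have "4*k+a k = 4*k'+a k'" using h(3) by simp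
    ultimately show "k = k'" using arith4[of "a k" "a k'" k k'] by blast
  qed
  show ?thesis unfolding eq using card_image[OF inj] .
qed


lemma RL_eq:
  assumes S: "S \<subseteq> Pow (Zint 1 (4*m))" and T: "T \<subseteq> Pow (Zint (4*m + 1) (2 * (4*m)))"
  shows "rect_times S T \<inter> Lset (4*m) =
    (\<lambda>(a,b). FF m a b) ` ({a \<in> DD m. enc m 0 a \<in> S} \<times> {b \<in> DD m. enc m (4*m) b \<in> T})"
proof
  show "rect_times S T \<inter> Lset (4*m) \<subseteq>
    (\<lambda>(a,b). FF m a b) ` ({a \<in> DD m. enc m 0 a \<in> S} \<times> {b \<in> DD m. enc m (4*m) b \<in> T})"
  proof
    fix U assume U: "U \<in> rect_times S T \<inter> Lset (4*m)"
    then obtain V W where VW: "U = V \<union> W" "V \<in> S" "W \<in> T" by (auto simp: rect_times_def)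
    have Vs: "V \<subseteq> Zint 1 (4*m)" using S VW by auto
    have Ws: "W \<subseteq> Zint (4*m + 1) (2 * (4*m))" using T VW by auto
    have Lk: "card (U \<inter> Iblk k) = 1" if "k \<in> {1..2*m}" for k
      using U that unfolding Lset_def by (simp add: div_mult_self1_is_m)
    have V1: "card (V \<inter> Zint (0 + 4*j + 1) (0 + 4*j + 4)) = 1" if j: "j < m" for j
    proof -
      have I: "Iblk (j+1) = Zint (0 + 4*j + 1) (0 + 4*j + 4)" by (simp add: Iblk_def add.commute)
      have "W \<inter> Iblk (j+1) = {}" using Ws j unfolding I Zint_def by auto
      then have "V \<inter> Zint (0 + 4*j + 1) (0 + 4*j + 4) = U \<inter> Iblk (j+1)" using VW(1) I by blast
      then show ?thesis using Lk[of "j+1"] j by simp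
    qed
    have W1: "card (W \<inter> Zint (4*m + 4*j + 1) (4*m + 4*j + 4)) = 1" if j: "j < m" for j
    proof -
      have I: "Iblk (m+j+1) = Zint (4*m + 4*j + 1) (4*m + 4*j + 4)" by (simp add: Iblk_def algebra_simps)
      have "V \<inter> Iblk (m+j+1) = {}" using Vs j unfolding I Zint_def by auto
      then have "W \<inter> Zint (4*m + 4*j + 1) (4*m + 4*j + 4) = U \<inter> Iblk (m+j+1)" using VW(1) I by blast
      then show ?thesis using Lk[of "m+j+1"] j by simp
    qed
    obtain a where a: "a \<in> DD m" "V = enc m 0 a"
      using enc_surj[of V 0 m] Vs V1 by auto
    obtain b where b: "b \<in> DD m" "W = enc m (4*m) b"
      using enc_surj[of W "4*m" m] Ws W1 by (auto simp: mult_2)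
    have "U = FF m a b" using VW a b by (simp add: FF_def)
    moreover have "(a,b) \<in> {a \<in> DD m. enc m 0 a \<in> S} \<times> {b \<in> DD m. enc m (4*m) b \<in> T}"
      using a b VW by auto
    ultimately show "U \<in> (\<lambda>(a,b). FF m a b) ` ({a \<in> DD m. enc m 0 a \<in> S} \<times> {b \<in> DD m. enc m (4*m) b \<in> T})"
      by force
  qed
  show "(\<lambda>(a,b). FF m a b) ` ({a \<in> DD m. enc m 0 a \<in> S} \<times> {b \<in> DD m. enc m (4*m) b \<in> T})
      \<subseteq> rect_times S T \<inter> Lset (4*m)"
  proof clarify
    fix a b assume h: "a \<in> DD m" "enc m 0 a \<in> S" "b \<in> DD m" "enc m (4*m) b \<in> T"
    then show "FF m a b \<in> rect_times S T \<inter> Lset (4*m)"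
      using FF_L[of a m b] unfolding rect_times_def FF_def by blast
  qed
qed

theorem mainTheorem11:
  fixes n :: nat and S T :: "nat set set"
  assumes "4 dvd n"
    and "S \<subseteq> Pow (Zint 1 n)"
    and "T \<subseteq> Pow (Zint (n + 1) (2 * n))"
  shows "\<bar>int (card (rect_times S T \<inter> Aset n)) - int (card (rect_times S T \<inter> Bset n))\<bar>
           \<le> 2 ^ (3 * (n div 4))"
proof -
  obtain m where n: "n = 4*m" using assms(1) by auto
  have md: "n div 4 = m" using n by simp
  define S' where "S' = {a \<in> DD m. enc m 0 a \<in> S}"
  define T' where "T' = {b \<in> DD m. enc m (4*m) b \<in> T}"
  define P where "P = S' \<times> T'"
  define c where "c p = card {k. k < m \<and> fst p k = snd p k}" for p :: "(nat \<Rightarrow> nat) \<times> (nat \<Rightarrow> nat)"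
  define G where "G = (\<lambda>(a,b). FF m a b)"
  define R where "R = rect_times S T"
  have PD: "P \<subseteq> DD m \<times> DD m" unfolding P_def S'_def T'_def by auto
  have finD: "finite (DD m)" by (simp add: finite_PiE)
  have finP: "finite P" using PD finD finite_subset by (metis finite_SigmaI)
  have RL: "R \<inter> Lset n = G ` P"
    unfolding R_def G_def P_def S'_def T'_def n using RL_eq assms(2,3) n by simp
  have injG: "inj_on G P" using FF_inj PD unfolding G_def by (rule inj_on_subset)
  have GA: "G p \<in> Aset n \<longleftrightarrow> odd (c p)" if "p \<in> P" for p
  proof -
    obtain a b where p: "p = (a,b)" by force
    have ab: "a \<in> DD m" "b \<in> DD m" using PD that p by auto
    show ?thesis using FF_L[OF ab] FF_pairs[OF ab] unfolding G_def p c_def Aset_def n by simp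
  qed
  have AL: "Aset n \<subseteq> Lset n" unfolding Aset_def by auto
  have RA: "R \<inter> Aset n = G ` {p \<in> P. odd (c p)}"
  proof -
    have "R \<inter> Aset n = (R \<inter> Lset n) \<inter> Aset n" using AL by blast
    also have "\<dots> = G ` {p \<in> P. odd (c p)}" unfolding RL using GA by auto
    finally show ?thesis .
  qed
  have RB: "R \<inter> Bset n = G ` {p \<in> P. \<not> odd (c p)}"
  proof -
    have "R \<inter> Bset n = (R \<inter> Lset n) - Aset n" unfolding Bset_def by blast
    also have "\<dots> = G ` {p \<in> P. \<not> odd (c p)}" unfolding RL using GA by auto
    finally show ?thesis .
  qed
  have cA: "card (R \<inter> Aset n) = card {p \<in> P. odd (c p)}"
    unfolding RA by (rule card_image) (rule inj_on_subset[OF injG], auto)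
  have cB: "card (R \<inter> Bset n) = card {p \<in> P. \<not> odd (c p)}"
    unfolding RB by (rule card_image) (rule inj_on_subset[OF injG], auto)
  have "int (card {p \<in> P. odd (c p)}) - int (card {p \<in> P. \<not> odd (c p)})
      = (\<Sum>p\<in>P. (if odd (c p) then 1 else -1 :: int))"
  proof -
    have "(\<Sum>p\<in>P. (if odd (c p) then 1 else -1 :: int)) =
       (\<Sum>p\<in>P \<inter> {p. odd (c p)}. 1) + (\<Sum>p\<in>P \<inter> - {p. odd (c p)}. -1)"
      by (rule sum.If_cases[OF finP])
    also have "P \<inter> {p. odd (c p)} = {p \<in> P. odd (c p)}" by auto
    also have "P \<inter> - {p. odd (c p)} = {p \<in> P. \<not> odd (c p)}" by auto
    finally show ?thesis by simp
  qed
  also have "\<dots> = (\<Sum>p\<in>P. - sig m (fst p) (snd p))"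
    by (rule sum.cong) (simp_all add: sig_parity c_def)
  also have "\<dots> = - (\<Sum>p\<in>P. sig m (fst p) (snd p))"
    by (simp add: sum_negf)
  also have "(\<Sum>p\<in>P. sig m (fst p) (snd p)) = (\<Sum>a\<in>S'. \<Sum>b\<in>T'. sig m a b)"
    unfolding P_def by (simp add: sum.cartesian_product split_def)
  finally have eq: "int (card (R \<inter> Aset n)) - int (card (R \<inter> Bset n)) = - (\<Sum>a\<in>S'. \<Sum>b\<in>T'. sig m a b)"
    using cA cB by simp
  have "\<bar>\<Sum>a\<in>S'. \<Sum>b\<in>T'. sig m a b\<bar> \<le> 2^(3*m)"
    by (rule disc) (auto simp: S'_def T'_def)
  then show ?thesis using eq unfolding R_def md by simp
qed

end
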